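(* Let $(X,\ell)$ and $(Y,\ell')$ be filtered vector spaces over a field $\kappa$ such that $\ell(X\setminus\{0\})$ and $\ell'(Y\setminus\{0\})$ are well-ordered subsets of $\mathbb{R}$, and let $\phi\colon X\to Y$ be a $\kappa$-linear isomorphism. Then there is an $\ell$-orthogonal basis $\{v_\alpha\}$ of $X$ such that $\{\phi(v_\alpha)\}$ is an $\ell'$-orthogonal basis of $Y$.
   Context: A filtered vector space over a field $\kappa$ is a pair $(V,\ell)$ with $V$ a $\kappa$-vector space and $\ell\colon V\to\mathbb{R}\cup\{-\infty\}$ such that $\ell(v)=-\infty$ iff $v=0$, $\ell(cv)=\ell(v)$ for $c\in\kappa\setminus\{0\}$, and $\ell(v+w)\le\max\{\ell(v),\ell(w)\}$. A subset $S\subset V\setminus\{0\}$ is $\ell$-orthogonal if $\ell(\sum_{i=1}^n c_iv_i)=\max\{\ell(v_i):c_i\neq0\}$ for all finitely many distinct $v_1,\dots,v_n\in S$ and $c_i\in\kappa$. *)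

theory Defs
  imports Main "HOL-Library.Extended_Real"
begin

text \<open>A filtered vector space (V, l) over a field: l maps into the reals together
with minus infinity (modelled in ereal, with the value plus infinity excluded).\<close>
definition filtered_vs :: "('k::field \<Rightarrow> 'v::ab_group_add \<Rightarrow> 'v) \<Rightarrow> ('v \<Rightarrow> ereal) \<Rightarrow> bool" where
  "filtered_vs scale l \<longleftrightarrow> vector_space scale
     \<and> (\<forall>v. l v \<noteq> \<infinity>)
     \<and> (\<forall>v. l v = -\<infinity> \<longleftrightarrow> v = 0)
     \<and> (\<forall>c v. c \<noteq> 0 \<longrightarrow> l (scale c v) = l v)
     \<and> (\<forall>v w. l (v + w) \<le> max (l v) (l w))"

definition well_ordered_set :: "ereal set \<Rightarrow> bool" where
  "well_ordered_set S \<longleftrightarrow> (\<forall>T. T \<subseteq> S \<longrightarrow> T \<noteq> {} \<longrightarrow> (\<exists>m\<in>T. \<forall>t\<in>T. m \<le> t))"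

text \<open>l-orthogonal subset S (of V minus 0): for every finite F in S and coefficients c,
l (sum c_v v) is the maximum of l v over v in F with c v nonzero (empty max = -infinity).\<close>
definition l_orthogonal :: "('k::field \<Rightarrow> 'v::ab_group_add \<Rightarrow> 'v) \<Rightarrow> ('v \<Rightarrow> ereal) \<Rightarrow> 'v set \<Rightarrow> bool" where
  "l_orthogonal scale l S \<longleftrightarrow> 0 \<notin> S \<and>
     (\<forall>F c. finite F \<longrightarrow> F \<subseteq> S \<longrightarrow>
        l (\<Sum>v\<in>F. scale (c v) v) = Sup (l ` {v\<in>F. c v \<noteq> 0}))"

definition is_basis :: "('k::field \<Rightarrow> 'v::ab_group_add \<Rightarrow> 'v) \<Rightarrow> 'v set \<Rightarrow> bool" where
  "is_basis scale B \<longleftrightarrow> \<not> module.dependent scale B \<and> module.span scale B = UNIV"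

end

theory Submission imports Defs begin

context vector_space begin

lemma fv_props:
  assumes "filtered_vs scale l"
  shows "vector_space scale" "l v \<noteq> \<infinity>" "l v = -\<infinity> \<longleftrightarrow> v = 0"
    "c \<noteq> 0 \<Longrightarrow> l (scale c v) = l v" "l (v + w) \<le> max (l v) (l w)"
  using assms unfolding filtered_vs_def by auto

lemma fv_zero: assumes "filtered_vs scale l" shows "l 0 = -\<infinity>"
  using fv_props[OF assms] by auto

lemma fv_neg: assumes "filtered_vs scale l" shows "l (- v) = l v"
proof -
  have "l (scale (-1) v) = l v" using fv_props(4)[OF assms, of "-1"] by simp
  then show ?thesis by (simp add: scale_minus_left)
qed

lemma fv_diff: assumes "filtered_vs scale l" shows "l (v - w) \<le> max (l v) (l w)"
  using fv_props(5)[OF assms, of v "-w"] fv_neg[OF assms, of w] by simp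

lemma fv_strict: assumes "filtered_vs scale l" "l w < l v" shows "l (v + w) = l v"
proof -
  have "l v \<le> max (l (v + w)) (l w)" using fv_diff[OF assms(1), of "v + w" w] by simp
  then have "l v \<le> l (v + w)" using assms(2) by (auto simp: max_def split: if_splits)
  moreover have "l (v + w) \<le> l v" using fv_props(5)[OF assms(1), of v w] assms(2) by simp
  ultimately show ?thesis by simp
qed

lemma fv_sum_le: assumes "filtered_vs scale l" "finite S" "\<And>x. x \<in> S \<Longrightarrow> l (f x) \<le> s"
  shows "l (sum f S) \<le> s"
  using assms(2,3)
proof (induction S rule: finite_induct)
  case empty then show ?case using fv_zero[OF assms(1)] by simp
next
  case (insert x F)
  then have "l (f x) \<le> s" "l (sum f F) \<le> s" by auto
  then show ?case using fv_props(5)[OF assms(1), of "f x" "sum f F"]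
    by (metis max.bounded_iff order_trans sum.insert insert.hyps)
qed

lemma fv_sum_less: assumes "filtered_vs scale l" "finite S" "\<And>x. x \<in> S \<Longrightarrow> l (f x) < s"
    "s \<noteq> -\<infinity>"
  shows "l (sum f S) < s"
  using assms(2,3)
proof (induction S rule: finite_induct)
  case empty then show ?case using fv_zero[OF assms(1)] assms(4) by (cases s) auto
next
  case (insert x F)
  then have "l (f x) < s" "l (sum f F) < s" by auto
  then show ?case using fv_props(5)[OF assms(1), of "f x" "sum f F"]
    by (metis max_less_iff_conj order_le_less_trans sum.insert insert.hyps)
qed

lemma orth_indep:
  assumes "filtered_vs scale l" "l_orthogonal scale l S"
  shows "independent S"
proof
  assume "dependent S"
  then obtain T u v where T: "finite T" "T \<subseteq> S" "v \<in> T" "u v \<noteq> 0" "(\<Sum>v\<in>T. scale (u v) v) = 0"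
    by (auto simp: dependent_explicit)
  have "l 0 = Sup (l ` {w\<in>T. u w \<noteq> 0})"
    using assms(2) T unfolding l_orthogonal_def by metis
  moreover have "l v \<le> Sup (l ` {w\<in>T. u w \<noteq> 0})"
    using T by (intro Sup_upper) auto
  moreover have "v \<noteq> 0" using assms(2) T unfolding l_orthogonal_def by auto
  ultimately show False using fv_zero[OF assms(1)] fv_props(3)[OF assms(1), of v]
    by (metis ereal_infty_less_eq(2))
qed

lemma orth_from_mod:
  assumes F1: "filtered_vs scale l1" and F2: "filtered_vs scale l2" and B0: "0 \<notin> B"
  and H: "\<And>F c s t. finite F \<Longrightarrow> F \<subseteq> B \<Longrightarrow> (\<forall>b\<in>F. l1 b = s \<and> l2 b = t) \<Longrightarrow>
     (\<Sum>b\<in>F. scale (c b) b) \<in> span ({v. l1 v < s \<and> l2 v \<le> t} \<union> {v. l1 v \<le> s \<and> l2 v < t})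
     \<Longrightarrow> \<forall>b\<in>F. c b = 0"
  shows "l_orthogonal scale l1 B"
  unfolding l_orthogonal_def
proof (intro conjI allI impI)
  show "0 \<notin> B" by fact
  fix F and c :: "'b \<Rightarrow> 'a" assume fin: "finite F" and FB: "F \<subseteq> B"
  define S where "S = {v\<in>F. c v \<noteq> 0}"
  have finS: "finite S" using fin S_def by simp
  have SB: "S \<subseteq> B" using FB S_def by auto
  have sumS: "(\<Sum>v\<in>F. scale (c v) v) = (\<Sum>v\<in>S. scale (c v) v)"
    unfolding S_def by (rule sum.mono_neutral_right) (auto simp: fin)
  show "l1 (\<Sum>v\<in>F. scale (c v) v) = Sup (l1 ` {v\<in>F. c v \<noteq> 0})"
  proof (cases "S = {}")
    case True
    then show ?thesis using sumS fv_zero[OF F1] by (simp add: S_def[symmetric] bot_ereal_def)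
  next
    case False
    define s where "s = Max (l1 ` S)"
    have SupS: "Sup (l1 ` S) = s" unfolding s_def using finS False by (simp add: cSup_eq_Max)
    have "s \<in> l1 ` S" unfolding s_def using finS False by (intro Max_in) auto
    then obtain b0 where b0: "b0 \<in> S" "l1 b0 = s" by auto
    have sninf: "s \<noteq> -\<infinity>" using b0 SB B0 fv_props(3)[OF F1, of b0] by auto
    have sle: "\<And>v. v \<in> S \<Longrightarrow> l1 v \<le> s" unfolding s_def using finS by simp
    define Ss where "Ss = {v\<in>S. l1 v = s}"
    define Sl where "Sl = {v\<in>S. l1 v < s}"
    have SU: "S = Ss \<union> Sl" "Ss \<inter> Sl = {}" using sle by (auto simp: Ss_def Sl_def order_le_less)
    have finSs: "finite Ss" "finite Sl" using finS by (auto simp: Ss_def Sl_def)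
    define y where "y = (\<Sum>v\<in>Ss. scale (c v) v)"
    define z where "z = (\<Sum>v\<in>Sl. scale (c v) v)"
    have sum_yz: "(\<Sum>v\<in>S. scale (c v) v) = y + z"
      unfolding y_def z_def using SU finSs by (simp add: sum.union_disjoint)
    have cS: "\<And>v. v \<in> S \<Longrightarrow> c v \<noteq> 0" by (simp add: S_def)
    have cSs: "\<And>v. v \<in> Ss \<Longrightarrow> c v \<noteq> 0" and cSl: "\<And>v. v \<in> Sl \<Longrightarrow> c v \<noteq> 0"
      using cS by (auto simp: Ss_def Sl_def)
    have lz: "l1 z < s" unfolding z_def
      by (rule fv_sum_less[OF F1 finSs(2) _ sninf]) (auto simp: Sl_def fv_props(4)[OF F1] cS)
    have ly: "l1 y = s"
    proof (rule ccontr)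
      assume "l1 y \<noteq> s"
      moreover have "l1 y \<le> s" unfolding y_def
        by (rule fv_sum_le[OF F1 finSs(1)]) (auto simp: Ss_def fv_props(4)[OF F1] cS)
      ultimately have ylt: "l1 y < s" by simp
      have SsNE: "Ss \<noteq> {}" using b0 Ss_def by auto
      define t where "t = Max (l2 ` Ss)"
      have "t \<in> l2 ` Ss" unfolding t_def using finSs SsNE by (intro Max_in) auto
      then obtain b1 where b1: "b1 \<in> Ss" "l2 b1 = t" by auto
      have tninf: "t \<noteq> -\<infinity>" using b1 SB B0 fv_props(3)[OF F2, of b1] by (auto simp: Ss_def)
      have tle: "\<And>v. v \<in> Ss \<Longrightarrow> l2 v \<le> t" unfolding t_def using finSs by simp
      define St where "St = {v\<in>Ss. l2 v = t}"
      define Su where "Su = {v\<in>Ss. l2 v < t}"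
      have SU2: "Ss = St \<union> Su" "St \<inter> Su = {}" using tle by (auto simp: St_def Su_def order_le_less)
      have finSt: "finite St" "finite Su" using finSs by (auto simp: St_def Su_def)
      define y1 where "y1 = (\<Sum>v\<in>St. scale (c v) v)"
      define y2 where "y2 = (\<Sum>v\<in>Su. scale (c v) v)"
      have "y = y1 + y2" unfolding y_def y1_def y2_def using SU2 finSt by (simp add: sum.union_disjoint)
      then have y1eq: "y1 = y - y2" by simp
      have ly2: "l2 y2 < t" unfolding y2_def
        by (rule fv_sum_less[OF F2 finSt(2) _ tninf]) (auto simp: Su_def fv_props(4)[OF F2] cSs)
      have l1y2: "l1 y2 \<le> s" unfolding y2_def
        by (rule fv_sum_le[OF F1 finSt(2)]) (auto simp: Su_def Ss_def fv_props(4)[OF F1] cS)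
      have l2y: "l2 y \<le> t" unfolding y_def
        by (rule fv_sum_le[OF F2 finSs(1)]) (auto simp: fv_props(4)[OF F2] cSs tle)
      have "y1 \<in> span ({v. l1 v < s \<and> l2 v \<le> t} \<union> {v. l1 v \<le> s \<and> l2 v < t})"
        unfolding y1eq by (intro span_diff span_base) (auto simp: ylt l2y ly2 l1y2)
      moreover have "St \<subseteq> B" using SB SU SU2 by auto
      moreover have "\<forall>b\<in>St. l1 b = s \<and> l2 b = t" by (auto simp: St_def Ss_def)
      ultimately have "\<forall>b\<in>St. c b = 0" using H[where F=St and c=c and s=s and t=t] finSt unfolding y1_def by blast
      moreover have "b1 \<in> St" using b1 St_def by auto
      ultimately show False using cSs b1 by auto
    qed
    have "l1 (y + z) = s" using fv_strict[OF F1, of z y] lz ly by simp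
    then show ?thesis using sumS sum_yz SupS S_def by simp
  qed
qed

lemma wo_all:
  assumes F: "filtered_vs scale l" and W: "well_ordered_set (l ` (UNIV - {0}))"
  shows "well_ordered_set (l ` UNIV)"
  unfolding well_ordered_set_def
proof (intro allI impI)
  fix T assume T: "T \<subseteq> range l" "T \<noteq> {}"
  show "\<exists>m\<in>T. \<forall>t\<in>T. m \<le> t"
  proof (cases "-\<infinity> \<in> T")
    case True then show ?thesis by (intro bexI[of _ "-\<infinity>"]) auto
  next
    case False
    have "T \<subseteq> l ` (UNIV - {0})"
    proof
      fix x assume "x \<in> T"
      then obtain v where "x = l v" using T by auto
      then have "v \<noteq> 0" using False \<open>x \<in> T\<close> fv_zero[OF F] by auto
      then show "x \<in> l ` (UNIV - {0})" using \<open>x = l v\<close> by auto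
    qed
    then show ?thesis using W T unfolding well_ordered_set_def by blast
  qed
qed

lemma fv_scale_le: assumes F: "filtered_vs scale l" shows "l (scale c x) \<le> l x"
proof (cases "c = 0")
  case True then show ?thesis using fv_zero[OF F] by simp
next
  case False then show ?thesis using fv_props(4)[OF F] by simp
qed

lemma bi_basis:
  assumes F1: "filtered_vs scale l1" and F2: "filtered_vs scale l2"
    and W1: "well_ordered_set (l1 ` (UNIV - {0}))" and W2: "well_ordered_set (l2 ` (UNIV - {0}))"
  shows "\<exists>B. independent B \<and> span B = UNIV \<and> l_orthogonal scale l1 B \<and> l_orthogonal scale l2 B"
proof -
  define Xs where "Xs s t = {v. l1 v \<le> s \<and> l2 v \<le> t}" for s t
  define G where "G s t = {v. l1 v < s \<and> l2 v \<le> t} \<union> {v. l1 v \<le> s \<and> l2 v < t}" for s t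
  have subX: "subspace (Xs s t)" for s t
    unfolding subspace_def Xs_def
    using fv_zero[OF F1] fv_zero[OF F2] fv_props(5)[OF F1] fv_props(5)[OF F2]
      fv_scale_le[OF F1] fv_scale_le[OF F2]
    apply auto
    by (meson max.boundedI order_trans)+
  have GX: "span (G s t) \<subseteq> Xs s t" for s t
    by (rule span_minimal[OF _ subX]) (auto simp: G_def Xs_def)
  have exA: "\<exists>A. A \<subseteq> span (G s t) \<and> independent A \<and> span (G s t) \<subseteq> span A" for s t
  proof -
    obtain A0 where "{} \<subseteq> A0" "A0 \<subseteq> span (G s t)" "independent A0" "span (G s t) \<subseteq> span A0"
      by (rule maximal_independent_subset_extend[of "{}" "span (G s t)"]) (simp_all add: independent_empty)
    then show ?thesis by blast
  qed
  define A where "A s t = (SOME A. A \<subseteq> span (G s t) \<and> independent A \<and> span (G s t) \<subseteq> span A)" for s t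
  have A: "A s t \<subseteq> span (G s t) \<and> independent (A s t) \<and> span (G s t) \<subseteq> span (A s t)" for s t
    unfolding A_def by (rule someI_ex[OF exA])
  have A1: "A s t \<subseteq> span (G s t)" and A3: "span (G s t) \<subseteq> span (A s t)" for s t
    using A[of s t] by simp_all
  have exE: "\<exists>E. A s t \<subseteq> E \<and> E \<subseteq> Xs s t \<and> independent E \<and> Xs s t \<subseteq> span E" for s t
  proof -
    have "A s t \<subseteq> Xs s t" using A1[of s t] GX[of s t] by simp
    then obtain E0 where "A s t \<subseteq> E0" "E0 \<subseteq> Xs s t" "independent E0" "Xs s t \<subseteq> span E0"
      using maximal_independent_subset_extend[of "A s t" "Xs s t"] A[of s t] by auto
    then show ?thesis by blast
  qed
  define E where "E s t = (SOME E. A s t \<subseteq> E \<and> E \<subseteq> Xs s t \<and> independent E \<and> Xs s t \<subseteq> span E)" for s t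
  have E: "A s t \<subseteq> E s t \<and> E s t \<subseteq> Xs s t \<and> independent (E s t) \<and> Xs s t \<subseteq> span (E s t)" for s t
    unfolding E_def by (rule someI_ex[OF exE])
  have E1: "A s t \<subseteq> E s t" and E2: "E s t \<subseteq> Xs s t" and E3: "independent (E s t)"
    and E4: "Xs s t \<subseteq> span (E s t)" for s t
    using E[of s t] by simp_all
  define B where "B = {b. \<exists>s t. b \<in> E s t \<and> b \<notin> A s t}"
  have K1: "b \<notin> span (G s t)" if "b \<in> E s t" "b \<notin> A s t" for b s t
  proof
    assume "b \<in> span (G s t)"
    then have "b \<in> span (A s t)" using A3 by blast
    moreover have "span (A s t) \<subseteq> span (E s t - {b})" using E1[of s t] that by (intro span_mono) auto
    ultimately have "dependent (E s t)" unfolding dependent_def using that by blast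
    then show False using E3 by blast
  qed
  have K2: "l1 b = s \<and> l2 b = t" if "b \<in> E s t" "b \<notin> A s t" for b s t
  proof -
    have "b \<in> Xs s t" using E2 that by blast
    then have le: "l1 b \<le> s" "l2 b \<le> t" by (auto simp: Xs_def)
    have "b \<notin> G s t" using K1[OF that] span_base by blast
    then show ?thesis using le by (auto simp: G_def order_le_less)
  qed
  have B0: "0 \<notin> B" using K1 span_zero unfolding B_def by blast
  have K3: "\<forall>b\<in>F. c b = 0"
    if fin: "finite F" and FB: "F \<subseteq> B" and lev: "\<forall>b\<in>F. l1 b = s \<and> l2 b = t"
      and insp: "(\<Sum>b\<in>F. scale (c b) b) \<in> span (G s t)" for F c s t
  proof -
    have FE: "F \<subseteq> E s t" and FA: "F \<inter> A s t = {}"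
    proof -
      have "b \<in> E s t \<and> b \<notin> A s t" if "b \<in> F" for b
      proof -
        obtain s' t' where b: "b \<in> E s' t'" "b \<notin> A s' t'" using FB \<open>b \<in> F\<close> unfolding B_def by blast
        then have "s' = s" "t' = t" using K2[OF b] lev \<open>b \<in> F\<close> by auto
        then show ?thesis using b by simp
      qed
      then show "F \<subseteq> E s t" "F \<inter> A s t = {}" by auto
    qed
    have "(\<Sum>b\<in>F. scale (c b) b) \<in> span (A s t)" using insp A3 by blast
    then obtain T r where T: "finite T" "T \<subseteq> A s t" "(\<Sum>b\<in>F. scale (c b) b) = (\<Sum>a\<in>T. scale (r a) a)"
      unfolding span_explicit by blast
    define u where "u v = (if v \<in> F then c v else - r v)" for v
    have disj: "F \<inter> T = {}" using FA T by auto
    have "(\<Sum>v\<in>F \<union> T. scale (u v) v) = (\<Sum>v\<in>F. scale (u v) v) + (\<Sum>v\<in>T. scale (u v) v)"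
      using fin T disj by (simp add: sum.union_disjoint)
    also have "(\<Sum>v\<in>F. scale (u v) v) = (\<Sum>v\<in>F. scale (c v) v)"
      by (rule sum.cong) (auto simp: u_def)
    also have "(\<Sum>v\<in>T. scale (u v) v) = (\<Sum>v\<in>T. - scale (r v) v)"
      using disj by (intro sum.cong) (auto simp: u_def scale_minus_left)
    also have "\<dots> = - (\<Sum>v\<in>T. scale (r v) v)" by (simp add: sum_negf)
    finally have z: "(\<Sum>v\<in>F \<union> T. scale (u v) v) = 0" using T by simp
    have "F \<union> T \<subseteq> E s t" using FE T E1 by blast
    then have "u b = 0" if "b \<in> F" for b
      using independentD[OF E3 _ _ z] fin T that by blast
    then show ?thesis by (auto simp: u_def)
  qed
  have orth1: "l_orthogonal scale l1 B"
  proof (rule orth_from_mod[OF F1 F2 B0])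
    fix F c s t
    assume a: "finite F" "F \<subseteq> B" "\<forall>b\<in>F. l1 b = s \<and> l2 b = t"
      "(\<Sum>b\<in>F. scale (c b) b) \<in> span ({v. l1 v < s \<and> l2 v \<le> t} \<union> {v. l1 v \<le> s \<and> l2 v < t})"
    have a4: "(\<Sum>b\<in>F. scale (c b) b) \<in> span (G s t)" using a(4) unfolding G_def .
    show "\<forall>b\<in>F. c b = 0" by (rule K3[OF a(1) a(2) a(3) a4])
  qed
  have orth2: "l_orthogonal scale l2 B"
  proof (rule orth_from_mod[OF F2 F1 B0])
    fix F c s t
    assume a: "finite F" "F \<subseteq> B" "\<forall>b\<in>F. l2 b = s \<and> l1 b = t"
      "(\<Sum>b\<in>F. scale (c b) b) \<in> span ({v. l2 v < s \<and> l1 v \<le> t} \<union> {v. l2 v \<le> s \<and> l1 v < t})"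
    have geq: "{v. l2 v < s \<and> l1 v \<le> t} \<union> {v. l2 v \<le> s \<and> l1 v < t} = G t s" by (auto simp: G_def)
    have a3: "\<forall>b\<in>F. l1 b = t \<and> l2 b = s" using a(3) by auto
    have a4: "(\<Sum>b\<in>F. scale (c b) b) \<in> span (G t s)" using a(4) unfolding geq .
    show "\<forall>b\<in>F. c b = 0" by (rule K3[OF a(1) a(2) a3 a4])
  qed
  define R where "R = {(u, v). (l1 u < l1 v \<and> l2 u \<le> l2 v) \<or> (l1 u \<le> l1 v \<and> l2 u < l2 v)}"
  have WA1: "well_ordered_set (range l1)" by (rule wo_all[OF F1 W1])
  have WA2: "well_ordered_set (range l2)" by (rule wo_all[OF F2 W2])
  have wfR: "wf R"
  proof (rule wfI_min)
    fix x Q assume "x \<in> (Q :: 'b set)"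
    then obtain s0 where s0: "s0 \<in> l1 ` Q" "\<forall>s\<in>l1 ` Q. s0 \<le> s"
      using WA1[unfolded well_ordered_set_def, rule_format, of "l1 ` Q"] by auto
    define Q' where "Q' = {v\<in>Q. l1 v = s0}"
    have "Q' \<noteq> {}" using s0 Q'_def by auto
    then obtain t0 where t0: "t0 \<in> l2 ` Q'" "\<forall>t\<in>l2 ` Q'. t0 \<le> t"
      using WA2[unfolded well_ordered_set_def, rule_format, of "l2 ` Q'"] by auto
    then obtain z where z: "z \<in> Q'" "l2 z = t0" by auto
    show "\<exists>z\<in>Q. \<forall>y. (y, z) \<in> R \<longrightarrow> y \<notin> Q"
    proof (intro bexI allI impI)
      show "z \<in> Q" using z Q'_def by auto
      fix y assume yR: "(y, z) \<in> R" show "y \<notin> Q"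
      proof
        assume yQ: "y \<in> Q"
        then have "s0 \<le> l1 y" using s0 by auto
        moreover have "l1 z = s0" using z Q'_def by auto
        ultimately have "l1 y = s0" "l2 y < l2 z" using yR unfolding R_def by auto
        then have "y \<in> Q'" using yQ Q'_def by auto
        then have "t0 \<le> l2 y" using t0 by auto
        then show False using \<open>l2 y < l2 z\<close> z by auto
      qed
    qed
  qed
  have spB: "v \<in> span B" for v
  proof (induction v rule: wf_induct_rule[OF wfR])
    case (1 v)
    define s where "s = l1 v"
    define t where "t = l2 v"
    have IH: "u \<in> span B" if "(u, v) \<in> R" for u using 1 that by blast
    have "G s t \<subseteq> span B"
    proof
      fix u assume "u \<in> G s t"
      then have "(u, v) \<in> R" unfolding G_def R_def s_def t_def by auto
      then show "u \<in> span B" by (rule IH)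
    qed
    then have "span (G s t) \<subseteq> span B" by (rule span_minimal) simp
    then have "A s t \<subseteq> span B" using A1[of s t] by (rule_tac order_trans) auto
    moreover have "E s t - A s t \<subseteq> span B"
    proof
      fix b assume "b \<in> E s t - A s t"
      then have "b \<in> B" unfolding B_def by blast
      then show "b \<in> span B" by (rule span_base)
    qed
    ultimately have "E s t \<subseteq> span B" by blast
    then have "span (E s t) \<subseteq> span B" by (rule span_minimal) simp
    moreover have "v \<in> Xs s t" by (simp add: Xs_def s_def t_def)
    ultimately show ?case using E4 by blast
  qed
  show ?thesis using orth1 orth2 orth_indep[OF F1 orth1] spB by blast
qed

end
lemma orthD: "l_orthogonal scale l S \<Longrightarrow> finite F \<Longrightarrow> F \<subseteq> S \<Longrightarrow>
  l (\<Sum>v\<in>F. scale (c v) v) = Sup (l ` {v\<in>F. c v \<noteq> 0})"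
  unfolding l_orthogonal_def by blast

theorem proposition3p19:
  fixes scaleX :: "'k::field \<Rightarrow> 'x::ab_group_add \<Rightarrow> 'x"
    and scaleY :: "'k \<Rightarrow> 'y::ab_group_add \<Rightarrow> 'y"
    and l :: "'x \<Rightarrow> ereal" and l' :: "'y \<Rightarrow> ereal"
    and \<phi> :: "'x \<Rightarrow> 'y"
  assumes "filtered_vs scaleX l" and "filtered_vs scaleY l'"
    and "well_ordered_set (l ` (UNIV - {0}))"
    and "well_ordered_set (l' ` (UNIV - {0}))"
    and "Vector_Spaces.linear scaleX scaleY \<phi>" and "bij \<phi>"
  shows "\<exists>B. is_basis scaleX B \<and> l_orthogonal scaleX l B
             \<and> is_basis scaleY (\<phi> ` B) \<and> l_orthogonal scaleY l' (\<phi> ` B)"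
proof -
  interpret X: vector_space scaleX using assms(1) unfolding filtered_vs_def by blast
  interpret Y: vector_space scaleY using assms(2) unfolding filtered_vs_def by blast
  interpret L: Vector_Spaces.linear scaleX scaleY \<phi> by (rule assms(5))
  define l'' where "l'' v = l' (\<phi> v)" for v
  have inj: "inj \<phi>" and sj: "surj \<phi>" using assms(6) by (auto simp: bij_def)
  have phi0: "\<phi> 0 = 0" by (rule L.zero)
  have phi_eq0: "\<phi> v = 0 \<longleftrightarrow> v = 0" for v using inj phi0 by (metis injD)
  have Fl'': "filtered_vs scaleX l''"
    unfolding filtered_vs_def
  proof (intro conjI allI impI)
    show "vector_space scaleX" by (rule X.vector_space_axioms)
    fix v show "l'' v \<noteq> \<infinity>" unfolding l''_def using assms(2) unfolding filtered_vs_def by blast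
    show "l'' v = -\<infinity> \<longleftrightarrow> v = 0" unfolding l''_def
      using Y.fv_props(3)[OF assms(2), of "\<phi> v"] phi_eq0 by simp
  next
    fix c v assume "(c::'k) \<noteq> 0"
    then show "l'' (scaleX c v) = l'' v" unfolding l''_def L.scale
      using Y.fv_props(4)[OF assms(2)] by simp
  next
    fix v w show "l'' (v + w) \<le> max (l'' v) (l'' w)" unfolding l''_def L.add
      using Y.fv_props(5)[OF assms(2)] by simp
  qed
  have img: "\<phi> ` (UNIV - {0}) = UNIV - {0}"
    using sj phi_eq0 by (auto simp: image_iff)
  have l''_eq: "l'' = l' \<circ> \<phi>" by (auto simp: l''_def)
  have "l'' ` (UNIV - {0}) = l' ` (UNIV - {0})"
    unfolding l''_eq image_comp[symmetric] img ..
  then have Wl'': "well_ordered_set (l'' ` (UNIV - {0}))" using assms(4) by simp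
  obtain B where B: "X.independent B" "X.span B = UNIV" "l_orthogonal scaleX l B"
      "l_orthogonal scaleX l'' B"
    using X.bi_basis[OF assms(1) Fl'' assms(3) Wl''] by blast
  have B0: "0 \<notin> B" using B(3) unfolding l_orthogonal_def by blast
  have orthY: "l_orthogonal scaleY l' (\<phi> ` B)"
    unfolding l_orthogonal_def
  proof (intro conjI allI impI)
    show "0 \<notin> \<phi> ` B" using B0 phi_eq0 by auto
    fix F and c :: "'y \<Rightarrow> 'k" assume fin: "finite F" and FB: "F \<subseteq> \<phi> ` B"
    define G where "G = B \<inter> \<phi> -` F"
    have GF: "\<phi> ` G = F"
    proof
      show "\<phi> ` G \<subseteq> F" unfolding G_def by blast
      show "F \<subseteq> \<phi> ` G"
      proof
        fix w assume "w \<in> F"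
        then obtain v where "v \<in> B" "w = \<phi> v" using FB by blast
        then show "w \<in> \<phi> ` G" unfolding G_def using \<open>w \<in> F\<close> by blast
      qed
    qed
    have finG: "finite G" unfolding G_def
      using finite_vimageI[OF fin inj] by (rule finite_subset[rotated]) blast
    have injG: "inj_on \<phi> G" using inj by (rule inj_on_subset) simp
    have GB: "G \<subseteq> B" unfolding G_def by auto
    have "(\<Sum>w\<in>F. scaleY (c w) w) = (\<Sum>v\<in>G. scaleY (c (\<phi> v)) (\<phi> v))"
      unfolding GF[symmetric] by (rule sum.reindex[OF injG, unfolded comp_def])
    also have "\<dots> = \<phi> (\<Sum>v\<in>G. scaleX (c (\<phi> v)) v)" by (simp add: L.sum L.scale)
    finally have eq: "l' (\<Sum>w\<in>F. scaleY (c w) w) = l'' (\<Sum>v\<in>G. scaleX (c (\<phi> v)) v)"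
      unfolding l''_def by simp
    have "l'' (\<Sum>v\<in>G. scaleX (c (\<phi> v)) v) = Sup (l'' ` {v\<in>G. c (\<phi> v) \<noteq> 0})"
      by (rule orthD[OF B(4) finG GB])
    moreover have "l'' ` {v\<in>G. c (\<phi> v) \<noteq> 0} = l' ` {w\<in>F. c w \<noteq> 0}"
    proof -
      have "\<phi> ` {v\<in>G. c (\<phi> v) \<noteq> 0} = {w\<in>F. c w \<noteq> 0}" unfolding GF[symmetric] by blast
      then show ?thesis unfolding l''_eq image_comp[symmetric] by simp
    qed
    ultimately show "l' (\<Sum>w\<in>F. scaleY (c w) w) = Sup (l' ` {w\<in>F. c w \<noteq> 0})"
      using eq by simp
  qed
  have indepY: "Y.independent (\<phi> ` B)" by (rule Y.orth_indep[OF assms(2) orthY])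
  have spanY: "Y.span (\<phi> ` B) = UNIV"
    using L.span_image[of B] B(2) sj by simp
  show ?thesis unfolding is_basis_def
    by (rule exI[of _ B]) (simp add: B(1) B(2) B(3) indepY spanY orthY)
qed

end
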